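(* Let $y$ be a Lyndon word with $|y|>1$, written as $y=x^kzb$ where $x$ is a Lyndon word, $k\ge 1$, $|x|$ is the smallest period of $x^kz$, $z$ is a proper prefix of $x$ (possibly empty), $a$ is the letter such that $za$ is a prefix of $x$, and $b$ is a letter with $a<b$. For $e=0,1,\dots,k$ let $$P_e=\{\,w \text{ prefix of } y \;:\; e|x|<|w|<\min\{(e+1)|x|,\,|y|\}\,\}.$$ Then for all $0\le e<f\le k$, every $u\in P_e$ and every $v\in P_f$ satisfy $u\prec v$.
   Context: Lexicographic order $<$ on finite and infinite words: $u<v$ if $u$ is a proper prefix of $v$, or $u=ras$, $v=rbt$ with letters $a<b$. A Lyndon word is a non-empty word strictly smaller than each of its proper non-empty suffixes. Infinite ordering: for non-empty words $u,v$, $u\prec v$ iff $u^\infty<v^\infty$, or $u^\infty=v^\infty$ and $|u|>|v|$, where $u^\infty=uuu\cdots$. A period of a word $w$ is an integer $p\ge1$ with $w[i]=w[i+p]$ whenever both are defined. *)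

theory Defs
  imports Main "HOL-Library.Sublist"
begin

definition lex_less :: "'a::linorder list \<Rightarrow> 'a list \<Rightarrow> bool" where
  "lex_less u v \<longleftrightarrow> strict_prefix u v \<or>
     (\<exists>r c d s t. u = r @ [c] @ s \<and> v = r @ [d] @ t \<and> c < d)"

definition lyndon :: "'a::linorder list \<Rightarrow> bool" where
  "lyndon w \<longleftrightarrow> w \<noteq> [] \<and> (\<forall>i. 0 < i \<and> i < length w \<longrightarrow> lex_less w (drop i w))"

definition omega_word :: "'a list \<Rightarrow> nat \<Rightarrow> 'a" where
  "omega_word u = (\<lambda>i. u ! (i mod length u))"

definition inf_lex_less :: "(nat \<Rightarrow> 'a::linorder) \<Rightarrow> (nat \<Rightarrow> 'a) \<Rightarrow> bool" where
  "inf_lex_less f g \<longleftrightarrow> (\<exists>n. (\<forall>i<n. f i = g i) \<and> f n < g n)"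

definition inf_prec :: "'a::linorder list \<Rightarrow> 'a list \<Rightarrow> bool" where
  "inf_prec u v \<longleftrightarrow> inf_lex_less (omega_word u) (omega_word v) \<or>
     (omega_word u = omega_word v \<and> length u > length v)"

definition is_period :: "'a list \<Rightarrow> nat \<Rightarrow> bool" where
  "is_period w p \<longleftrightarrow> p \<ge> 1 \<and> (\<forall>i. i + p < length w \<longrightarrow> w ! i = w ! (i + p))"

definition smallest_period :: "'a list \<Rightarrow> nat \<Rightarrow> bool" where
  "smallest_period w p \<longleftrightarrow> is_period w p \<and> (\<forall>q. is_period w q \<longrightarrow> p \<le> q)"

definition Pset :: "'a list \<Rightarrow> 'a list \<Rightarrow> nat \<Rightarrow> 'a list set" where
  "Pset y x e = {w. prefix w y \<and> e * length x < length w \<and>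
                     length w < min ((e + 1) * length x) (length y)}"

end

theory Submission
  imports Defs
begin

lemma lex_less_nth:
  assumes "lex_less u v"
  shows "(length u < length v \<and> (\<forall>t<length u. u!t = v!t)) \<or>
         (\<exists>j. j < length u \<and> j < length v \<and> (\<forall>t<j. u!t = v!t) \<and> u!j < v!j)"
proof -
  from assms[unfolded lex_less_def] show ?thesis
  proof
    assume "strict_prefix u v"
    then obtain w where "v = u @ w" "w \<noteq> []" by (auto simp: strict_prefix_def prefix_def)
    then show ?thesis by (auto simp: nth_append)
  next
    assume "\<exists>r c d s t. u = r @ [c] @ s \<and> v = r @ [d] @ t \<and> c < d"
    then obtain r c d s t where h: "u = r @ [c] @ s" "v = r @ [d] @ t" "c < d" by blast
    show ?thesis
      apply (rule disjI2, rule exI[of _ "length r"])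
      using h by (auto simp: nth_append)
  qed
qed

lemma lemA:
  assumes "lyndon x" "0 < t" "t < length x"
  shows "\<exists>j. j < length x - t \<and> (\<forall>i<j. x!(t+i) = x!i) \<and> x!j < x!(t+j)"
proof -
  have "lex_less x (drop t x)" using assms unfolding lyndon_def by blast
  from lex_less_nth[OF this] show ?thesis
  proof
    assume "length x < length (drop t x) \<and> (\<forall>i<length x. x!i = drop t x ! i)"
    then show ?thesis by (metis diff_le_self length_drop leD)
  next
    assume "\<exists>j<length x. j < length (drop t x) \<and> (\<forall>i<j. x!i = drop t x ! i) \<and> x!j < drop t x ! j"
    then obtain j where j: "j < length (drop t x)" "\<forall>i<j. x!i = drop t x ! i" "x!j < drop t x ! j" by blast
    have "\<forall>i<j. x!(t+i) = x!i" using j assms(3) by (simp add: nth_drop)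
    moreover have "x!j < x!(t+j)" using j assms(3) by (simp add: nth_drop)
    ultimately show ?thesis using j(1) by auto
  qed
qed

lemma lemC:
  assumes "lyndon x" "0 < t" "t < length x" "j < length x - t"
    "\<forall>i<j. x!(t+i) = x!i" "x!(t+j) < x!j"
  shows False
proof -
  obtain j' where j': "j' < length x - t" "\<forall>i<j'. x!(t+i) = x!i" "x!j' < x!(t+j')"
    using lemA[OF assms(1-3)] by blast
  consider "j' < j" | "j < j'" | "j = j'" by linarith
  then show False
  proof cases
    case 1 then have "x!(t+j') = x!j'" using assms(5) by blast
    then show ?thesis using j'(3) by simp
  next
    case 2 then have "x!(t+j) = x!j" using j'(2) by blast
    then show ?thesis using assms(6) by simp
  next
    case 3 then show ?thesis using j'(3) assms(6) by auto
  qed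
qed

lemma lemB:
  assumes "lyndon x" "0 < r" "r < length x"
  shows "\<exists>j<length x. (\<forall>i<j. x!i = x!(i mod r)) \<and> x!(j mod r) < x!j"
proof (cases "\<forall>i<length x. x!i = x!(i mod r)")
  case True
  obtain j where j: "j < length x - r" "x!j < x!(r+j)"
    using lemA[OF assms] by blast
  have "x!(r+j) = x!((r+j) mod r)" using True j by auto
  also have "\<dots> = x!(j mod r)" by simp
  also have "\<dots> = x!j" using True j by auto
  finally show ?thesis using j by simp
next
  case False
  then obtain j0 where "j0 < length x" "x!j0 \<noteq> x!(j0 mod r)" by blast
  define P where "P = (\<lambda>i. i < length x \<and> x!i \<noteq> x!(i mod r))"
  have Pj0: "P j0" unfolding P_def using \<open>j0 < length x\<close> \<open>x!j0 \<noteq> x!(j0 mod r)\<close> by blast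
  define j where "j = (LEAST i. P i)"
  have Pj: "P j" unfolding j_def by (rule LeastI[of P j0, OF Pj0])
  have j: "j < length x" "x!j \<noteq> x!(j mod r)" using Pj unfolding P_def by auto
  have jl: "\<forall>i<j. \<not> P i" unfolding j_def using not_less_Least by blast
  have eqb: "\<forall>i<j. x!i = x!(i mod r)" using jl j(1) unfolding P_def by auto
  show ?thesis
  proof (cases "x!(j mod r) < x!j")
    case True then show ?thesis using j eqb by blast
  next
    case False
    hence lt: "x!j < x!(j mod r)" using j(2) by auto
    have jr: "r \<le> j" proof (rule ccontr) assume "\<not> r \<le> j" then show False using j(2) by simp qed
    define t where "t = r * (j div r)"
    have tpos: "0 < t" unfolding t_def using jr assms(2) by (simp add: div_greater_zero_iff)
    have tj: "t + j mod r = j" unfolding t_def by simp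
    have "False"
    proof (rule lemC[OF assms(1) tpos, of "j mod r"])
      show "t < length x" using tj j(1) by linarith
      show "j mod r < length x - t" using tj j(1) by linarith
      show "\<forall>i<j mod r. x ! (t + i) = x ! i"
      proof (intro allI impI)
        fix i assume i: "i < j mod r"
        have "x!(t+i) = x!((t+i) mod r)" using eqb tj i by simp
        also have "(t+i) mod r = i" unfolding t_def using i mod_less_divisor[OF assms(2), of j] by simp
        finally show "x ! (t + i) = x ! i" .
      qed
      show "x ! (t + j mod r) < x ! (j mod r)" using tj lt by simp
    qed
    then show ?thesis ..
  qed
qed

lemma lemD:
  assumes "lyndon x" "e * length x < m" "m < (Suc e) * length x"
  shows "\<exists>j<(Suc e) * length x. (\<forall>i<j. x!((i mod m) mod length x) = x!(i mod length x))
           \<and> x!((j mod m) mod length x) < x!(j mod length x)"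
proof -
  let ?n = "length x"
  show ?thesis
  proof (cases "e = 0")
    case True
    hence m: "0 < m" "m < ?n" using assms by auto
    obtain j where j: "j < ?n" "\<forall>i<j. x!i = x!(i mod m)" "x!(j mod m) < x!j"
      using lemB[OF assms(1) m] by blast
    have mm: "\<And>i. (i mod m) mod ?n = i mod m" using m
      by (metis mod_less mod_less_divisor order.strict_trans)
    show ?thesis
      apply (rule exI[of _ j])
      using j True mm by auto
  next
    case False
    define r where "r = m - e * ?n"
    have r: "0 < r" "r < ?n" using assms unfolding r_def by auto
    have mr: "m = e * ?n + r" using assms unfolding r_def by auto
    obtain d where d: "d < ?n - r" "\<forall>i<d. x!(r+i) = x!i" "x!d < x!(r+d)"
      using lemA[OF assms(1) r] by blast
    have "?n \<le> e * ?n" using False by simp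
    hence nm: "?n \<le> m" using mr by linarith
    show ?thesis
    proof (rule exI[of _ "m + d"], intro conjI allI impI)
      show "m + d < Suc e * ?n" using mr d by simp
    next
      fix i assume i: "i < m + d"
      show "x!((i mod m) mod ?n) = x!(i mod ?n)"
      proof (cases "i < m")
        case True
        then show ?thesis by simp
      next
        case False
        define s where "s = i - m"
        have s: "s < d" "i = m + s" using False i unfolding s_def by auto
        have "i mod m = s" using s nm d by simp
        moreover have "s mod ?n = s" using s d by simp
        moreover have "i mod ?n = r + s"
        proof -
          have "i = (r + s) + e * ?n" using s mr by simp
          then have "i mod ?n = (r+s) mod ?n" by (metis mod_mult_self1)
          then show ?thesis using s d by simp
        qed
        ultimately show ?thesis using d(2) s by simp
      qed
    next
      have "(m + d) mod m = d" using nm d by simp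
      moreover have "d mod ?n = d" using d by simp
      moreover have "(m + d) mod ?n = r + d"
      proof -
        have "m + d = (r + d) + e * ?n" using mr by simp
        then have "(m+d) mod ?n = (r+d) mod ?n" by (metis mod_mult_self1)
        then show ?thesis using d by simp
      qed
      ultimately show "x!(((m + d) mod m) mod ?n) < x!((m + d) mod ?n)" using d(3) by simp
    qed
  qed
qed

lemma concat_rep_nth:
  "i < k * length x \<Longrightarrow> concat (replicate k x) ! i = x ! (i mod length x)"
proof (induction k arbitrary: i)
  case 0 then show ?case by simp
next
  case (Suc k)
  show ?case
  proof (cases "i < length x")
    case True then show ?thesis by (simp add: nth_append)
  next
    case False
    then have "concat (replicate (Suc k) x) ! i = concat (replicate k x) ! (i - length x)"
      by (simp add: nth_append)
    also have "\<dots> = x ! ((i - length x) mod length x)" using Suc False by simp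
    also have "(i - length x) mod length x = i mod length x" using False
      by (simp add: le_mod_geq)
    finally show ?thesis .
  qed
qed

lemma prefix_y_nth:
  assumes "y = concat (replicate k x) @ w" "prefix u y" "i < length u" "i < k * length x"
  shows "u ! i = x ! (i mod length x)"
proof -
  obtain t where "y = u @ t" using assms(2) by (auto simp: prefix_def)
  then have "u ! i = y ! i" using assms(3) by (simp add: nth_append)
  have "length (concat (replicate k x)) = k * length x" by (simp add: length_concat sum_list_replicate)
  hence "y ! i = concat (replicate k x) ! i" using assms(1,4) by (simp add: nth_append)
  show ?thesis using \<open>u ! i = y ! i\<close> \<open>y ! i = concat (replicate k x) ! i\<close> concat_rep_nth assms(4) by simp
qed

theorem mainTheorem5:
  fixes y x z :: "'a::linorder list" and k :: nat and a b :: 'a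
  assumes "lyndon y" and "length y > 1"
    and "y = concat (replicate k x) @ z @ [b]"
    and "lyndon x" and "k \<ge> 1"
    and "smallest_period (concat (replicate k x) @ z) (length x)"
    and "strict_prefix z x" and "prefix (z @ [a]) x" and "a < b"
  shows "\<forall>e f u v. e < f \<and> f \<le> k \<and> u \<in> Pset y x e \<and> v \<in> Pset y x f \<longrightarrow> inf_prec u v"
proof (intro allI impI)
  fix e f u v
  assume h: "e < f \<and> f \<le> k \<and> u \<in> Pset y x e \<and> v \<in> Pset y x f"
  let ?n = "length x"
  have u: "prefix u y" "e * ?n < length u" "length u < Suc e * ?n"
    using h unfolding Pset_def by auto
  have v: "prefix v y" "f * ?n < length v"
    using h unfolding Pset_def by auto
  have ef: "Suc e * ?n \<le> f * ?n" "f * ?n \<le> k * ?n" using h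
    by (simp_all only: mult_le_mono1 Suc_leI)
  obtain j where j: "j < Suc e * ?n"
      "\<forall>i<j. x!((i mod length u) mod ?n) = x!(i mod ?n)"
      "x!((j mod length u) mod ?n) < x!(j mod ?n)"
    using lemD[OF assms(4) u(2,3)] by blast
  have ou: "\<And>i. omega_word u i = x!((i mod length u) mod ?n)"
  proof -
    fix i
    have "0 < length u" using u(2) by linarith
    hence "i mod length u < length u" by simp
    moreover have "i mod length u < k * ?n" using u(3) ef
      by (meson calculation le_trans less_le_not_le not_le)
    ultimately show "omega_word u i = x!((i mod length u) mod ?n)"
      unfolding omega_word_def using prefix_y_nth[OF assms(3) u(1)] by blast
  qed
  have ov: "\<And>i. i < f * ?n \<Longrightarrow> omega_word v i = x!(i mod ?n)"
  proof -
    fix i assume i: "i < f * ?n"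
    then have "i mod length v = i" using v(2) by simp
    then show "omega_word v i = x!(i mod ?n)"
    proof -
      have "i < length v" "i < k * ?n" using i v(2) ef(2) by linarith+
      then have "v ! i = x ! (i mod ?n)" using prefix_y_nth[OF assms(3) v(1)] by blast
      then show ?thesis unfolding omega_word_def using \<open>i mod length v = i\<close> by simp
    qed
  qed
  have "inf_lex_less (omega_word u) (omega_word v)"
    unfolding inf_lex_less_def
    apply (rule exI[of _ j])
    using j ou ov ef by auto
  then show "inf_prec u v" unfolding inf_prec_def by blast
qed

end
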